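(* Let $d\ge1$ and let $I$ be a paving tropical ideal of degree $d+1$ in $\mathbb{B}[x_1^{\pm1},\dots,x_n^{\pm1},y_1^{\pm1},\dots,y_m^{\pm1}]$, with corresponding $\mathbb{Z}^{n+m}$-invariant $d$-partition $\mathcal{P}$ of $\mathbb{Z}^{n+m}$ (its set of hyperplanes of the underlying matroid). Identify $\mathbb{Z}^n$ with $\mathbb{Z}^n\times\{\mathbf 0\}\subset\mathbb{Z}^{n+m}$. (1) If no $S\in\mathcal{P}$ satisfies $\mathbb{Z}^n\subset S$, then $I\cap\mathbb{B}[x_1^{\pm1},\dots,x_n^{\pm1}]$ is a paving tropical ideal of degree $d+1$, corresponding to the $\mathbb{Z}^n$-invariant $d$-partition $\mathcal{P}|_{\mathbb{Z}^n}=\{S\cap\mathbb{Z}^n:S\in\mathcal{P},\ |S\cap\mathbb{Z}^n|\ge d\}$ of $\mathbb{Z}^n$. (2) If some $S\in\mathcal{P}$ satisfies $\mathbb{Z}^n\subset S$, then $I\cap\mathbb{B}[x_1^{\pm1},\dots,x_n^{\pm1}]$ is the paving tropical ideal of degree $d$ corresponding to the uniform $(d-1)$-partition of $\mathbb{Z}^n$ consisting of all subsets of size $d-1$ (i.e. its underlying matroid is the uniform matroid of rank $d$ on $\mathbb{Z}^n$).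
   Context: $\mathbb{B}=\{\infty,0\}$ with $\oplus=\min$ and multiplication $+$; $\operatorname{supp}(f)$ is the set of exponents with coefficient $\neq\infty$. A tropical ideal in a Laurent polynomial semiring over $\mathbb{B}$ is an ideal such that for all $f,g$ in it and $\mathbf u\in\operatorname{supp}(f)\cap\operatorname{supp}(g)$ there is $h$ in it with $\operatorname{supp}(f)\Delta\operatorname{supp}(g)\subset\operatorname{supp}(h)\subset(\operatorname{supp}(f)\cup\operatorname{supp}(g))\setminus\{\mathbf u\}$. The underlying matroid on the exponent lattice has as independent sets those containing no support of a polynomial of the ideal. The ideal is zero-dimensional of degree $r$ iff this matroid has finite rank $r$, and paving if moreover all circuits have size $r$ or $r+1$. Paving tropical ideals of degree $d+1$ in $\mathbb{B}[x_1^{\pm1},\dots,x_N^{\pm1}]$ correspond bijectively to $\mathbb{Z}^N$-invariant $d$-partitions of $\mathbb{Z}^N$, via the set of hyperplanes (maximal subsets of rank $d$) of the underlying matroid. A $d$-partition of a set $E$ is a collection of subsets (blocks) with at least two blocks, all of size $\ge d$, such that each $d$-subset of $E$ lies in exactly one block; $\mathbb{Z}^N$-invariance means invariance under all translations. *)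

theory Defs
  imports Main
begin

text \<open>A Laurent polynomial over the
Boolean tropical semifield B = {inf,0} is determined by its support, a finite subset of Z^N;
addition (min) is union of supports, multiplication is Minkowski sum of supports, and the
zero polynomial (all coefficients inf) has empty support.\<close>

definition lat :: "nat \<Rightarrow> int list set" where
  "lat N = {v. length v = N}"

definition vadd :: "int list \<Rightarrow> int list \<Rightarrow> int list" where
  "vadd u v = map2 (+) u v"

definition polys :: "nat \<Rightarrow> int list set set" where
  "polys N = {f. finite f \<and> f \<subseteq> lat N}"

definition mink :: "int list set \<Rightarrow> int list set \<Rightarrow> int list set" where
  "mink f g = {vadd u v | u v. u \<in> f \<and> v \<in> g}"

definition is_ideal :: "nat \<Rightarrow> int list set set \<Rightarrow> bool" where
  "is_ideal N I \<longleftrightarrow> I \<subseteq> polys N \<and> {} \<in> I \<and>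
     (\<forall>f\<in>I. \<forall>g\<in>I. f \<union> g \<in> I) \<and>
     (\<forall>f\<in>I. \<forall>g\<in>polys N. mink f g \<in> I)"

definition tropical_ideal :: "nat \<Rightarrow> int list set set \<Rightarrow> bool" where
  "tropical_ideal N I \<longleftrightarrow> is_ideal N I \<and>
     (\<forall>f\<in>I. \<forall>g\<in>I. \<forall>u\<in>f \<inter> g. \<exists>h\<in>I.
        (f - g) \<union> (g - f) \<subseteq> h \<and> h \<subseteq> (f \<union> g) - {u})"

definition indep :: "nat \<Rightarrow> int list set set \<Rightarrow> int list set \<Rightarrow> bool" where
  "indep N I A \<longleftrightarrow> A \<subseteq> lat N \<and> (\<forall>f\<in>I. f \<noteq> {} \<longrightarrow> \<not> f \<subseteq> A)"

definition circuit :: "nat \<Rightarrow> int list set set \<Rightarrow> int list set \<Rightarrow> bool" where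
  "circuit N I C \<longleftrightarrow> C \<subseteq> lat N \<and> \<not> indep N I C \<and> (\<forall>D. D \<subset> C \<longrightarrow> indep N I D)"

text \<open>Rank of a subset (meaningful when the matroid has finite rank).\<close>
definition mrank :: "nat \<Rightarrow> int list set set \<Rightarrow> int list set \<Rightarrow> nat" where
  "mrank N I X = Sup {card A | A. A \<subseteq> X \<and> finite A \<and> indep N I A}"

text \<open>Zero-dimensional of degree r: the underlying matroid has finite rank r.\<close>
definition zero_dim :: "nat \<Rightarrow> int list set set \<Rightarrow> nat \<Rightarrow> bool" where
  "zero_dim N I r \<longleftrightarrow> (\<forall>A. indep N I A \<longrightarrow> finite A \<and> card A \<le> r) \<and>
     (\<exists>A. indep N I A \<and> finite A \<and> card A = r)"

definition paving :: "nat \<Rightarrow> int list set set \<Rightarrow> nat \<Rightarrow> bool" where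
  "paving N I r \<longleftrightarrow> zero_dim N I r \<and>
     (\<forall>C. circuit N I C \<longrightarrow> finite C \<and> (card C = r \<or> card C = r + 1))"

text \<open>Hyperplanes: maximal subsets of the ground set of rank d (d = degree - 1).\<close>
definition hyperplanes :: "nat \<Rightarrow> int list set set \<Rightarrow> nat \<Rightarrow> int list set set" where
  "hyperplanes N I d = {H. H \<subseteq> lat N \<and> mrank N I H = d \<and>
      (\<forall>H'. H \<subset> H' \<and> H' \<subseteq> lat N \<longrightarrow> mrank N I H' \<noteq> d)}"

definition atleast :: "nat \<Rightarrow> 'a set \<Rightarrow> bool" where
  "atleast k X \<longleftrightarrow> (\<exists>Y\<subseteq>X. finite Y \<and> card Y = k)"

definition d_partition :: "'a set \<Rightarrow> nat \<Rightarrow> 'a set set \<Rightarrow> bool" where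
  "d_partition E d P \<longleftrightarrow> (\<forall>S\<in>P. S \<subseteq> E \<and> atleast d S) \<and>
     (\<exists>S\<in>P. \<exists>T\<in>P. S \<noteq> T) \<and>
     (\<forall>D. D \<subseteq> E \<and> finite D \<and> card D = d \<longrightarrow> (\<exists>!S. S \<in> P \<and> D \<subseteq> S))"

definition translation_invariant :: "nat \<Rightarrow> int list set set \<Rightarrow> bool" where
  "translation_invariant N P \<longleftrightarrow> (\<forall>S\<in>P. \<forall>v\<in>lat N. (\<lambda>u. vadd u v) ` S \<in> P)"

definition emb :: "nat \<Rightarrow> int list \<Rightarrow> int list" where
  "emb m v = v @ replicate m 0"

text \<open>I \<inter> B[x_1..x_n], viewed as a set of polynomials in the x variables only.\<close>
definition restrict_ideal :: "nat \<Rightarrow> nat \<Rightarrow> int list set set \<Rightarrow> int list set set" where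
  "restrict_ideal n m I = {g \<in> polys n. emb m ` g \<in> I}"

definition restrict_partition :: "nat \<Rightarrow> nat \<Rightarrow> nat \<Rightarrow> int list set set \<Rightarrow> int list set set" where
  "restrict_partition n m d P =
     {{v \<in> lat n. emb m v \<in> S} | S. S \<in> P \<and> atleast d {v \<in> lat n. emb m v \<in> S}}"

end

theory Submission
  imports Defs
begin

lemma indep_mono: "indep N I B \<Longrightarrow> A \<subseteq> B \<Longrightarrow> indep N I A"
  unfolding indep_def by blast

lemma indep_empty: "indep N I {}"
  unfolding indep_def by auto

locale bnd = fixes N :: nat and I :: "int list set set" and r :: nat
  assumes bnd: "\<And>A. indep N I A \<Longrightarrow> finite A \<and> card A \<le> r"
begin

lemma mr_fin: "finite {card A |A. A \<subseteq> X \<and> finite A \<and> indep N I A}"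
proof -
  have "{card A |A. A \<subseteq> X \<and> finite A \<and> indep N I A} \<subseteq> {..r}" using bnd by auto
  then show ?thesis using finite_subset by blast
qed

lemma mr_ne: "{card A |A. A \<subseteq> X \<and> finite A \<and> indep N I A} \<noteq> {}"
  using indep_empty by auto

lemma mrank_Max: "mrank N I X = Max {card A |A. A \<subseteq> X \<and> finite A \<and> indep N I A}"
  unfolding mrank_def using cSup_eq_Max[OF mr_fin mr_ne] .

lemma mrank_le: "A \<subseteq> X \<Longrightarrow> indep N I A \<Longrightarrow> card A \<le> mrank N I X"
  unfolding mrank_Max using mr_fin bnd by (intro Max_ge) auto

lemma mrank_ex: "\<exists>A. A \<subseteq> X \<and> finite A \<and> indep N I A \<and> card A = mrank N I X"
proof -
  have "mrank N I X \<in> {card A |A. A \<subseteq> X \<and> finite A \<and> indep N I A}"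
    unfolding mrank_Max using Max_in[OF mr_fin mr_ne] .
  then show ?thesis by auto
qed

lemma mrank_mono: "X \<subseteq> Y \<Longrightarrow> mrank N I X \<le> mrank N I Y"
  using mrank_ex[of X] mrank_le[of _ Y] by force

lemma mrank_bound: "mrank N I X \<le> r"
  using mrank_ex[of X] bnd by force

end

locale pav = fixes N :: nat and I :: "int list set set" and d :: nat
  assumes trop: "tropical_ideal N I" and pv: "paving N I (d+1)" and d1: "d \<ge> 1"
begin

lemma bnd_ax: "indep N I A \<Longrightarrow> finite A \<and> card A \<le> d + 1"
  using pv unfolding paving_def zero_dim_def by blast

sublocale bnd N I "d+1"
  by unfold_locales (rule bnd_ax)

lemma I_polys: "f \<in> I \<Longrightarrow> finite f \<and> f \<subseteq> lat N"
  using trop unfolding tropical_ideal_def is_ideal_def polys_def by blast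

lemma inI_dep: "f \<in> I \<Longrightarrow> f \<noteq> {} \<Longrightarrow> \<not> indep N I f"
  unfolding indep_def by blast

lemma elim: "f \<in> I \<Longrightarrow> g \<in> I \<Longrightarrow> u \<in> f \<inter> g \<Longrightarrow>
    \<exists>h\<in>I. (f - g) \<union> (g - f) \<subseteq> h \<and> h \<subseteq> (f \<union> g) - {u}"
  using trop unfolding tropical_ideal_def by blast

lemma small_indep: "A \<subseteq> lat N \<Longrightarrow> finite A \<Longrightarrow> card A \<le> d \<Longrightarrow> indep N I A"
proof (induction "card A" arbitrary: A rule: less_induct)
  case less
  show ?case
  proof (rule ccontr)
    assume na: "\<not> indep N I A"
    have "circuit N I A" unfolding circuit_def
    proof (intro conjI allI impI)
      show "A \<subseteq> lat N" by fact
      show "\<not> indep N I A" by fact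
      fix D assume "D \<subset> A"
      then show "indep N I D"
        using less psubset_card_mono[of A D] finite_subset[of D A] by auto
    qed
    then have "card A = d + 1 \<or> card A = d + 1 + 1" using pv unfolding paving_def by blast
    then show False using less by auto
  qed
qed

lemma dep_in_I: assumes "X \<subseteq> lat N" "finite X" "card X = d+1" "\<not> indep N I X" shows "X \<in> I"
proof -
  obtain f where f: "f \<in> I" "f \<noteq> {}" "f \<subseteq> X" using assms unfolding indep_def by blast
  have "\<not> indep N I f" using f inI_dep by blast
  moreover have "finite f" "f \<subseteq> lat N" using f assms finite_subset by auto
  ultimately have "\<not> card f \<le> d" using small_indep by blast
  moreover have "card f \<le> card X" using f assms card_mono by blast
  ultimately have "card f = card X" using assms by linarith
  then have "f = X" using card_subset_eq[OF assms(2) f(3)] by simp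
  then show ?thesis using f by simp
qed

lemma swap:
  assumes H: "H \<subseteq> lat N" "\<And>A. A \<subseteq> H \<Longrightarrow> indep N I A \<Longrightarrow> card A \<le> d"
    and x: "x \<in> lat N" "x \<notin> H"
    and B: "B \<subseteq> H" "finite B" "card B = d"
  shows "D \<subseteq> H \<Longrightarrow> finite D \<Longrightarrow> card D = d \<Longrightarrow> \<not> indep N I (insert x D) \<Longrightarrow> \<not> indep N I (insert x B)"
proof -
  have "\<forall>D. card (D - B) = k \<longrightarrow> D \<subseteq> H \<longrightarrow> finite D \<longrightarrow> card D = d \<longrightarrow> \<not> indep N I (insert x D) \<longrightarrow> \<not> indep N I (insert x B)" for k
  proof (induction k rule: less_induct)
  case (less k)
  show ?case
  proof (intro allI impI)
  fix D assume Dk: "card (D - B) = k" and DH: "D \<subseteq> H" and Df: "finite D" and Dc: "card D = d"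
    and Dn: "\<not> indep N I (insert x D)"
  show "\<not> indep N I (insert x B)"
  proof (cases "D = B")
    case True then show ?thesis using Dn by simp
  next
    case False
    have "\<not> D \<subseteq> B" using False card_subset_eq[OF B(2), of D] Dc B(3) by auto
    then obtain u where u: "u \<in> D" "u \<notin> B" by blast
    have "\<not> B \<subseteq> D" using False card_subset_eq[OF Df, of B] Dc B(3) by auto
    then obtain y where y: "y \<in> B" "y \<notin> D" by blast
    have yH: "y \<in> H" using y B(1) by blast
    have xy: "x \<noteq> y" using yH x(2) by blast
    have xD: "x \<notin> D" using DH x(2) by blast
    have c1: "card (insert y D) = d + 1" using Df Dc y(2) by simp
    have iyH: "insert y D \<subseteq> H" using DH yH by blast
    have "\<not> indep N I (insert y D)"
    proof
      assume "indep N I (insert y D)"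
      then have "card (insert y D) \<le> d" using H(2)[OF iyH] by blast
      then show False using c1 by simp
    qed
    then have gI: "insert y D \<in> I" using dep_in_I[of "insert y D"] c1 Df iyH H(1) by auto
    have c2: "card (insert x D) = d + 1" using Df Dc xD by simp
    have "insert x D \<subseteq> lat N" using x(1) DH H(1) by blast
    then have fI: "insert x D \<in> I" using dep_in_I[of "insert x D"] c2 Df Dn by auto
    have uu: "u \<in> insert x D \<inter> insert y D" using u by blast
    obtain h where h: "h \<in> I" "(insert x D - insert y D) \<union> (insert y D - insert x D) \<subseteq> h"
        "h \<subseteq> (insert x D \<union> insert y D) - {u}"
      using elim[OF fI gI uu] by blast
    define T where "T = insert x (insert y (D - {u}))"
    have "x \<in> insert x D - insert y D" using xy xD by blast
    then have xh: "x \<in> h" using h(2) by blast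
    have hT: "h \<subseteq> T" using h(3) unfolding T_def by blast
    have hfin: "finite h" "h \<subseteq> lat N" using I_polys h(1) by auto
    have nh: "\<not> indep N I h" using inI_dep h(1) xh by blast
    then have "\<not> card h \<le> d" using small_indep hfin by blast
    moreover have cT: "card T = d + 1"
      unfolding T_def using Df Dc u xD y xy d1 by (simp add: card_Diff_singleton)
    moreover have fT: "finite T" unfolding T_def using Df by simp
    ultimately have "card h = card T" using card_mono[OF fT hT] by linarith
    then have hT': "h = T" using card_subset_eq[OF fT hT] by simp
    define D' where "D' = insert y (D - {u})"
    have "insert x D' = T" unfolding D'_def T_def by simp
    then have nD': "\<not> indep N I (insert x D')" using hT' nh by simp
    have D'H: "D' \<subseteq> H" unfolding D'_def using DH yH by blast
    have fD': "finite D'" unfolding D'_def using Df by simp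
    have cD': "card D' = d" unfolding D'_def using Df Dc u y d1 by (simp add: card_Diff_singleton)
    have "D' - B = (D - B) - {u}" unfolding D'_def using y by blast
    moreover have "card ((D - B) - {u}) < card (D - B)"
      using u Df by (intro card_Diff1_less) auto
    ultimately have "card (D' - B) < k" using Dk by simp
    then show ?thesis using less D'H fD' cD' nD' by blast
  qed
  qed
  qed
  then show "D \<subseteq> H \<Longrightarrow> finite D \<Longrightarrow> card D = d \<Longrightarrow> \<not> indep N I (insert x D) \<Longrightarrow> \<not> indep N I (insert x B)" by blast
qed

lemma hyp_le: assumes "H \<in> hyperplanes N I d" "A \<subseteq> H" "indep N I A" shows "card A \<le> d"
  using assms mrank_le unfolding hyperplanes_def by fastforce

lemma key:
  assumes hH: "H \<in> hyperplanes N I d" and D: "D \<subseteq> H" "finite D" "card D = d"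
    and x: "x \<in> lat N" "\<not> indep N I (insert x D)"
  shows "x \<in> H"
proof (rule ccontr)
  assume xH: "x \<notin> H"
  have Hl: "H \<subseteq> lat N" and mH: "mrank N I H = d" using hH unfolding hyperplanes_def by auto
  have "H \<subset> insert x H" "insert x H \<subseteq> lat N" using xH x Hl by auto
  then have ne: "mrank N I (insert x H) \<noteq> d" using hH unfolding hyperplanes_def by blast
  have "indep N I D" using small_indep D Hl by auto
  then have "d \<le> mrank N I (insert x H)" using mrank_le[of D "insert x H"] D by auto
  then have gt: "mrank N I (insert x H) > d" using ne by linarith
  obtain B where B: "B \<subseteq> insert x H" "finite B" "indep N I B" "card B = mrank N I (insert x H)"
    using mrank_ex by blast
  have "x \<in> B"
  proof (rule ccontr)
    assume "x \<notin> B" then have "B \<subseteq> H" using B by blast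
    then show False using hyp_le[OF hH _ B(3)] B gt by linarith
  qed
  have "card (B - {x}) \<ge> d" using B gt \<open>x \<in> B\<close> by simp
  then obtain B0 where B0: "B0 \<subseteq> B - {x}" "card B0 = d"
    using obtain_subset_with_card_n by metis
  have fB0: "finite B0" using B0 B finite_subset by blast
  have B0H: "B0 \<subseteq> H" using B0 B by blast
  have "\<not> indep N I (insert x B0)"
    using swap[OF Hl _ x(1) xH B0H fB0 B0(2) D x(2)] hyp_le[OF hH] by blast
  moreover have "insert x B0 \<subseteq> B" using B0 \<open>x \<in> B\<close> by blast
  ultimately show False using indep_mono B(3) by blast
qed

lemma exists_hyp:
  assumes Y: "Y \<subseteq> lat N" "mrank N I Y = d"
  shows "\<exists>H \<in> hyperplanes N I d. Y \<subseteq> H"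
proof -
  define F where "F = {H. Y \<subseteq> H \<and> H \<subseteq> lat N \<and> mrank N I H = d}"
  have "F \<noteq> {}" using Y unfolding F_def by blast
  moreover have "\<Union>C \<in> F" if C: "C \<noteq> {}" "subset.chain F C" for C
  proof -
    have CF: "C \<subseteq> F" using C unfolding subset.chain_def by blast
    obtain H0 where "H0 \<in> C" using C by blast
    then have YU: "Y \<subseteq> \<Union>C" using CF unfolding F_def by blast
    have UL: "\<Union>C \<subseteq> lat N" using CF unfolding F_def by blast
    obtain A where A: "A \<subseteq> Y" "finite A" "indep N I A" "card A = d" using mrank_ex[of Y] Y by auto
    have ge: "d \<le> mrank N I (\<Union>C)" using mrank_le[of A "\<Union>C"] A YU by auto
    obtain B where B: "B \<subseteq> \<Union>C" "finite B" "indep N I B" "card B = mrank N I (\<Union>C)"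
      using mrank_ex by blast
    obtain H where H: "H \<in> C" "B \<subseteq> H" using finite_subset_Union_chain[OF B(2) B(1) C(1) C(2)] by blast
    have "card B \<le> mrank N I H" using mrank_le H B by blast
    also have "\<dots> = d" using H CF unfolding F_def by blast
    finally have "mrank N I (\<Union>C) = d" using ge B by linarith
    then show ?thesis using YU UL unfolding F_def by blast
  qed
  ultimately obtain M where M: "M \<in> F" "\<forall>X\<in>F. M \<subseteq> X \<longrightarrow> X = M"
    using subset_Zorn_nonempty[of F] by blast
  have "M \<in> hyperplanes N I d"
    unfolding hyperplanes_def
  proof (intro CollectI conjI allI impI)
    show "M \<subseteq> lat N" using M unfolding F_def by blast
    show "mrank N I M = d" using M unfolding F_def by blast
    fix H' assume H': "M \<subset> H' \<and> H' \<subseteq> lat N"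
    show "mrank N I H' \<noteq> d"
    proof
      assume "mrank N I H' = d"
      then have "H' \<in> F" using M H' unfolding F_def by blast
      then show False using M H' by blast
    qed
  qed
  then show ?thesis using M unfolding F_def by blast
qed

lemma mrank_indep: assumes "indep N I D" "finite D" shows "mrank N I D = card D"
proof -
  have "card D \<le> mrank N I D" using mrank_le assms by blast
  moreover obtain A where "A \<subseteq> D" "card A = mrank N I D" using mrank_ex by blast
  then have "mrank N I D \<le> card D" using card_mono assms by metis
  ultimately show ?thesis by simp
qed

lemma hyp_unique:
  assumes "H1 \<in> hyperplanes N I d" "H2 \<in> hyperplanes N I d" "D \<subseteq> H1" "D \<subseteq> H2"
    "finite D" "card D = d"
  shows "H2 \<subseteq> H1"
proof
  fix x assume x: "x \<in> H2"
  show "x \<in> H1"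
  proof (cases "x \<in> D")
    case True then show ?thesis using assms by blast
  next
    case False
    have xl: "x \<in> lat N" using x assms(2) unfolding hyperplanes_def by blast
    have "\<not> indep N I (insert x D)"
    proof
      assume "indep N I (insert x D)"
      then have "card (insert x D) \<le> d" using hyp_le[OF assms(2)] x assms(4) by blast
      then show False using False assms by simp
    qed
    then show ?thesis using key[OF assms(1,3,5,6) xl] by blast
  qed
qed

lemma dpart: "d_partition (lat N) d (hyperplanes N I d)"
  unfolding d_partition_def
proof (intro conjI ballI allI impI)
  fix S assume S: "S \<in> hyperplanes N I d"
  then show "S \<subseteq> lat N" unfolding hyperplanes_def by blast
  obtain A where "A \<subseteq> S" "finite A" "card A = mrank N I S" using mrank_ex by blast
  then show "atleast d S" using S unfolding atleast_def hyperplanes_def by auto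
next
  obtain B where B: "indep N I B" "finite B" "card B = d + 1" using pv unfolding paving_def zero_dim_def by blast
  have Bl: "B \<subseteq> lat N" using B unfolding indep_def by blast
  have "B \<noteq> {}" using B by auto
  then obtain b1 where b1: "b1 \<in> B" by blast
  have "card (B - {b1}) = d" using B b1 by simp
  then have "B - {b1} \<noteq> {}"
  proof (intro notI)
    assume "B - {b1} = {}"
    then have "d = 0" using \<open>card (B - {b1}) = d\<close> by (metis card.empty)
    then show False using d1 by simp
  qed
  then obtain b2 where b2: "b2 \<in> B - {b1}" by blast
  have b: "b1 \<in> B" "b2 \<in> B" "b1 \<noteq> b2" using b1 b2 by auto
  have hD: "\<exists>H \<in> hyperplanes N I d. B - {b} \<subseteq> H" if "b \<in> B" for b
  proof -
    have "indep N I (B - {b})" using indep_mono B by blast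
    then have "mrank N I (B - {b}) = d" using mrank_indep B that by simp
    moreover have "B - {b} \<subseteq> lat N" using Bl by blast
    ultimately show ?thesis using exists_hyp[of "B - {b}"] by blast
  qed
  obtain H1 where H1: "H1 \<in> hyperplanes N I d" "B - {b1} \<subseteq> H1" using hD b by blast
  obtain H2 where H2: "H2 \<in> hyperplanes N I d" "B - {b2} \<subseteq> H2" using hD b by blast
  have "H1 \<noteq> H2"
  proof
    assume "H1 = H2"
    then have "B \<subseteq> H1" using H1 H2 b by blast
    then show False using hyp_le[OF H1(1) _ B(1)] B by simp
  qed
  then show "\<exists>S\<in>hyperplanes N I d. \<exists>T\<in>hyperplanes N I d. S \<noteq> T" using H1 H2 by blast
next
  fix D assume D: "D \<subseteq> lat N \<and> finite D \<and> card D = d"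
  then have "indep N I D" using small_indep by simp
  then have "mrank N I D = d" using mrank_indep D by simp
  then obtain H where H: "H \<in> hyperplanes N I d" "D \<subseteq> H" using exists_hyp D by blast
  show "\<exists>!S. S \<in> hyperplanes N I d \<and> D \<subseteq> S"
  proof (rule ex1I[of _ H])
    show "H \<in> hyperplanes N I d \<and> D \<subseteq> H" using H by blast
    fix S assume "S \<in> hyperplanes N I d \<and> D \<subseteq> S"
    then show "S = H" using hyp_unique[of H S D] hyp_unique[of S H D] H D by blast
  qed
qed

end

lemma vadd_length[simp]: "length (vadd u v) = min (length u) (length v)"
  unfolding vadd_def by simp

lemma vadd_cancel: "length u = length w \<Longrightarrow> vadd (vadd u w) (map uminus w) = u"
proof (induction u arbitrary: w)
  case Nil then show ?case by (simp add: vadd_def)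
next
  case (Cons a u) then show ?case by (cases w) (auto simp: vadd_def)
qed

lemma neg_neg: "map uminus (map uminus (w::int list)) = w"
  by (simp add: comp_def)

lemma mink_single: "mink f {w} = (\<lambda>u. vadd u w) ` f"
  unfolding mink_def by auto

lemma tr_lat: "w \<in> lat N \<Longrightarrow> X \<subseteq> lat N \<Longrightarrow> (\<lambda>u. vadd u w) ` X \<subseteq> lat N"
  unfolding lat_def by auto

lemma neg_lat: "w \<in> lat N \<Longrightarrow> map uminus w \<in> lat N"
  unfolding lat_def by auto

lemma tr_cancel: "w \<in> lat N \<Longrightarrow> u \<in> lat N \<Longrightarrow> vadd (vadd u w) (map uminus w) = u"
  unfolding lat_def by (simp add: vadd_cancel)

lemma tr_back: assumes "w \<in> lat N" "X \<subseteq> lat N"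
  shows "(\<lambda>u. vadd u (map uminus w)) ` (\<lambda>u. vadd u w) ` X = X"
proof -
  have "(\<lambda>u. vadd u (map uminus w)) ` (\<lambda>u. vadd u w) ` X = (\<lambda>u. vadd (vadd u w) (map uminus w)) ` X"
    by (simp add: image_image)
  also have "\<dots> = id ` X"
    by (rule image_cong) (use assms tr_cancel in auto)
  finally show ?thesis by simp
qed

lemma tr_inj: "w \<in> lat N \<Longrightarrow> inj_on (\<lambda>u. vadd u w) (lat N)"
  by (rule inj_on_inverseI[where g = "\<lambda>u. vadd u (map uminus w)"]) (rule tr_cancel)

lemma tr_indep:
  assumes I: "is_ideal N I" and w: "w \<in> lat N" and A: "A \<subseteq> lat N" "indep N I A"
  shows "indep N I ((\<lambda>u. vadd u w) ` A)"
  unfolding indep_def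
proof (intro conjI ballI impI)
  show "(\<lambda>u. vadd u w) ` A \<subseteq> lat N" using tr_lat w A by blast
  fix f assume f: "f \<in> I" "f \<noteq> {}"
  show "\<not> f \<subseteq> (\<lambda>u. vadd u w) ` A"
  proof
    assume fs: "f \<subseteq> (\<lambda>u. vadd u w) ` A"
    have "{map uminus w} \<in> polys N" using neg_lat[OF w] unfolding polys_def by auto
    then have "mink f {map uminus w} \<in> I" using I f unfolding is_ideal_def by blast
    moreover have "mink f {map uminus w} \<subseteq> A"
    proof -
      have "(\<lambda>u. vadd u (map uminus w)) ` f \<subseteq> (\<lambda>u. vadd u (map uminus w)) ` (\<lambda>u. vadd u w) ` A"
        using fs by (rule image_mono)
      then show ?thesis unfolding mink_single tr_back[OF w A(1)] .
    qed
    moreover have "mink f {map uminus w} \<noteq> {}" using f unfolding mink_single by simp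
    ultimately show False using A unfolding indep_def by blast
  qed
qed

context bnd begin

lemma tr_mrank_ge:
  assumes I: "is_ideal N I" and w: "w \<in> lat N" and X: "X \<subseteq> lat N"
  shows "mrank N I X \<le> mrank N I ((\<lambda>u. vadd u w) ` X)"
proof -
  obtain A where A: "A \<subseteq> X" "finite A" "indep N I A" "card A = mrank N I X" using mrank_ex by blast
  have "card ((\<lambda>u. vadd u w) ` A) = card A"
    using card_image[OF inj_on_subset[OF tr_inj[OF w]]] A X by blast
  moreover have "indep N I ((\<lambda>u. vadd u w) ` A)" using tr_indep[OF I w _ A(3)] A X by blast
  moreover have "(\<lambda>u. vadd u w) ` A \<subseteq> (\<lambda>u. vadd u w) ` X" using A(1) by (rule image_mono)
  ultimately show ?thesis using mrank_le[of "(\<lambda>u. vadd u w) ` A" "(\<lambda>u. vadd u w) ` X"] A(4) by simp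
qed

lemma tr_mrank:
  assumes I: "is_ideal N I" and w: "w \<in> lat N" and X: "X \<subseteq> lat N"
  shows "mrank N I ((\<lambda>u. vadd u w) ` X) = mrank N I X"
proof -
  have "mrank N I ((\<lambda>u. vadd u w) ` X) \<le> mrank N I ((\<lambda>u. vadd u (map uminus w)) ` (\<lambda>u. vadd u w) ` X)"
    using tr_mrank_ge[OF I neg_lat[OF w] tr_lat[OF w X]] .
  then show ?thesis using tr_back[OF w X] tr_mrank_ge[OF I w X] by simp
qed

lemma tr_hyp:
  assumes I: "is_ideal N I"
  shows "translation_invariant N (hyperplanes N I d)"
  unfolding translation_invariant_def
proof (intro ballI)
  fix S v assume S: "S \<in> hyperplanes N I d" and v: "v \<in> lat N"
  have Sl: "S \<subseteq> lat N" and mS: "mrank N I S = d" using S unfolding hyperplanes_def by auto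
  let ?T = "(\<lambda>u. vadd u v) ` S"
  show "?T \<in> hyperplanes N I d"
    unfolding hyperplanes_def
  proof (intro CollectI conjI allI impI)
    show "?T \<subseteq> lat N" using tr_lat v Sl by blast
    show "mrank N I ?T = d" using tr_mrank[OF I v Sl] mS by simp
    fix H' assume H': "?T \<subset> H' \<and> H' \<subseteq> lat N"
    have H'l: "H' \<subseteq> lat N" and TH: "?T \<subseteq> H'" and TnH: "?T \<noteq> H'" using H' by auto
    let ?S' = "(\<lambda>u. vadd u (map uminus v)) ` H'"
    have "(\<lambda>u. vadd u (map uminus v)) ` ?T \<subseteq> ?S'" using TH by (rule image_mono)
    then have SS: "S \<subseteq> ?S'" unfolding tr_back[OF v Sl] .
    have "S \<noteq> ?S'"
    proof
      assume eq: "S = ?S'"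
      have "(\<lambda>u. vadd u (map uminus (map uminus v))) ` ?S' = H'"
        using tr_back[OF neg_lat[OF v] H'l] .
      then have "(\<lambda>u. vadd u v) ` ?S' = H'" by (simp add: neg_neg)
      then have "?T = H'" using eq by simp
      then show False using TnH by simp
    qed
    then have "S \<subset> ?S'" using SS by blast
    moreover have "?S' \<subseteq> lat N" using tr_lat[OF neg_lat[OF v] H'l] .
    ultimately have "mrank N I ?S' \<noteq> d" using S unfolding hyperplanes_def by blast
    then show "mrank N I H' \<noteq> d" using tr_mrank[OF I neg_lat[OF v], of H'] H' by simp
  qed
qed

end

lemma emb_len[simp]: "length (emb m v) = length v + m"
  unfolding emb_def by simp

lemma emb_inj: "inj (emb m)"
  unfolding inj_def emb_def by auto

lemma card_emb: "card (emb m ` A) = card A"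
  by (rule card_image) (rule inj_on_subset[OF emb_inj subset_UNIV])

lemma finite_emb: "finite (emb m ` A) \<longleftrightarrow> finite A"
  by (rule finite_image_iff) (rule inj_on_subset[OF emb_inj subset_UNIV])

lemma emb_lat: "v \<in> lat n \<Longrightarrow> emb m v \<in> lat (n + m)"
  unfolding lat_def by simp

lemma emb_lat_img: "X \<subseteq> lat n \<Longrightarrow> emb m ` X \<subseteq> lat (n + m)"
  using emb_lat by blast

lemma map2_rep: "map2 (+) (replicate m (0::int)) (replicate m 0) = replicate m 0"
  by (induction m) auto

lemma emb_vadd: "length u = length v \<Longrightarrow> emb m (vadd u v) = vadd (emb m u) (emb m v)"
  unfolding emb_def vadd_def by (simp add: zip_append map2_rep)

lemma emb_mink:
  assumes "f \<subseteq> lat n" "g \<subseteq> lat n"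
  shows "emb m ` mink f g = mink (emb m ` f) (emb m ` g)"
proof -
  have "emb m ` mink f g = {emb m (vadd u v) | u v. u \<in> f \<and> v \<in> g}"
    unfolding mink_def by blast
  also have "\<dots> = {vadd (emb m u) (emb m v) | u v. u \<in> f \<and> v \<in> g}"
  proof -
    have "\<And>u v. u \<in> f \<Longrightarrow> v \<in> g \<Longrightarrow> emb m (vadd u v) = vadd (emb m u) (emb m v)"
      using assms emb_vadd unfolding lat_def by blast
    then show ?thesis by metis
  qed
  also have "\<dots> = mink (emb m ` f) (emb m ` g)"
    unfolding mink_def by blast
  finally show ?thesis .
qed

lemma preimg:
  assumes "B \<subseteq> emb m ` X"
  shows "emb m ` {v \<in> X. emb m v \<in> B} = B"
  using assms by blast

lemma restr_ideal:
  assumes "is_ideal (n + m) I"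
  shows "is_ideal n (restrict_ideal n m I)"
  unfolding is_ideal_def restrict_ideal_def
proof (intro conjI ballI)
  show "{g \<in> polys n. emb m ` g \<in> I} \<subseteq> polys n" by blast
  show "{} \<in> {g \<in> polys n. emb m ` g \<in> I}" using assms unfolding is_ideal_def polys_def by auto
  fix f assume f: "f \<in> {g \<in> polys n. emb m ` g \<in> I}"
  {
    fix g assume g: "g \<in> {g \<in> polys n. emb m ` g \<in> I}"
    show "f \<union> g \<in> {g \<in> polys n. emb m ` g \<in> I}"
      using f g assms unfolding is_ideal_def polys_def by (auto simp: image_Un)
  }
  fix g assume g: "g \<in> polys n"
  have fl: "f \<subseteq> lat n" "finite f" using f unfolding polys_def by auto
  have gl: "g \<subseteq> lat n" "finite g" using g unfolding polys_def by auto
  have "emb m ` g \<in> polys (n + m)" using gl emb_lat_img unfolding polys_def by blast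
  then have "mink (emb m ` f) (emb m ` g) \<in> I" using f assms unfolding is_ideal_def by blast
  then have "emb m ` mink f g \<in> I" using emb_mink[OF fl(1) gl(1)] by simp
  moreover have "mink f g \<in> polys n"
  proof -
    have "mink f g = (\<lambda>(u, v). vadd u v) ` (f \<times> g)" unfolding mink_def by auto
    then have "finite (mink f g)" using fl gl by simp
    moreover have "mink f g \<subseteq> lat n"
    proof
      fix x assume "x \<in> mink f g"
      then obtain u v where uv: "x = vadd u v" "u \<in> f" "v \<in> g" unfolding mink_def by blast
      then have "length u = n" "length v = n" using fl gl unfolding lat_def by auto
      then show "x \<in> lat n" using uv unfolding lat_def by simp
    qed
    ultimately show ?thesis unfolding polys_def by blast
  qed
  ultimately show "mink f g \<in> {g \<in> polys n. emb m ` g \<in> I}" by blast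
qed

lemma restr_trop:
  assumes "tropical_ideal (n + m) I"
  shows "tropical_ideal n (restrict_ideal n m I)"
  unfolding tropical_ideal_def
proof (intro conjI ballI)
  show "is_ideal n (restrict_ideal n m I)"
    using assms restr_ideal unfolding tropical_ideal_def by blast
  fix f g u assume f: "f \<in> restrict_ideal n m I" and g: "g \<in> restrict_ideal n m I"
    and u: "u \<in> f \<inter> g"
  have fI: "emb m ` f \<in> I" and gI: "emb m ` g \<in> I" using f g unfolding restrict_ideal_def by auto
  have fl: "f \<subseteq> lat n" "finite f" "g \<subseteq> lat n" "finite g"
    using f g unfolding restrict_ideal_def polys_def by auto
  have "emb m u \<in> emb m ` f \<inter> emb m ` g" using u by blast
  then obtain h where h: "h \<in> I" "(emb m ` f - emb m ` g) \<union> (emb m ` g - emb m ` f) \<subseteq> h"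
    "h \<subseteq> (emb m ` f \<union> emb m ` g) - {emb m u}"
    using assms fI gI unfolding tropical_ideal_def by blast
  define h' where "h' = {v \<in> f \<union> g. emb m v \<in> h}"
  have eh: "emb m ` h' = h" unfolding h'_def using h(3) by blast
  have "h' \<in> polys n" unfolding h'_def polys_def using fl by auto
  then have h'J: "h' \<in> restrict_ideal n m I" using eh h(1) unfolding restrict_ideal_def by simp
  have inj: "inj (emb m)" by (rule emb_inj)
  have "(f - g) \<union> (g - f) \<subseteq> h'"
  proof
    fix v assume "v \<in> (f - g) \<union> (g - f)"
    then have "emb m v \<in> (emb m ` f - emb m ` g) \<union> (emb m ` g - emb m ` f)"
      using inj by (auto dest: injD)
    then show "v \<in> h'" using h(2) unfolding h'_def using \<open>v \<in> (f - g) \<union> (g - f)\<close> by blast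
  qed
  moreover have "h' \<subseteq> (f \<union> g) - {u}" unfolding h'_def using h(3) by blast
  ultimately show "\<exists>h\<in>restrict_ideal n m I. f - g \<union> (g - f) \<subseteq> h \<and> h \<subseteq> f \<union> g - {u}"
    using h'J by blast
qed

lemma restr_indep:
  assumes IP: "I \<subseteq> polys (n + m)"
  shows "indep n (restrict_ideal n m I) A \<longleftrightarrow> A \<subseteq> lat n \<and> indep (n + m) I (emb m ` A)"
proof
  assume A: "indep n (restrict_ideal n m I) A"
  have Al: "A \<subseteq> lat n" using A unfolding indep_def by blast
  have "indep (n + m) I (emb m ` A)"
    unfolding indep_def
  proof (intro conjI ballI impI)
    show "emb m ` A \<subseteq> lat (n + m)" using emb_lat_img Al by blast
    fix g assume g: "g \<in> I" "g \<noteq> {}"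
    show "\<not> g \<subseteq> emb m ` A"
    proof
      assume gA: "g \<subseteq> emb m ` A"
      define f where "f = {v \<in> A. emb m v \<in> g}"
      have ef: "emb m ` f = g" unfolding f_def by (rule preimg[OF gA])
      have "finite g" using g IP unfolding polys_def by blast
      then have "finite f" using ef finite_emb[of m f] by simp
      moreover have "f \<subseteq> lat n" using Al unfolding f_def by blast
      ultimately have "f \<in> polys n" unfolding polys_def by blast
      then have "f \<in> restrict_ideal n m I"
        unfolding restrict_ideal_def using ef g(1) by simp
      moreover have "f \<noteq> {}" using ef g(2) by blast
      moreover have "f \<subseteq> A" unfolding f_def by blast
      ultimately show False using A unfolding indep_def by blast
    qed
  qed
  then show "A \<subseteq> lat n \<and> indep (n + m) I (emb m ` A)" using Al by blast
next
  assume A: "A \<subseteq> lat n \<and> indep (n + m) I (emb m ` A)"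
  show "indep n (restrict_ideal n m I) A"
    unfolding indep_def
  proof (intro conjI ballI impI)
    show "A \<subseteq> lat n" using A by blast
    fix f assume f: "f \<in> restrict_ideal n m I" "f \<noteq> {}"
    show "\<not> f \<subseteq> A"
    proof
      assume "f \<subseteq> A"
      then have "emb m ` f \<subseteq> emb m ` A" by blast
      moreover have "emb m ` f \<in> I" "emb m ` f \<noteq> {}" using f unfolding restrict_ideal_def by auto
      moreover have "\<forall>h\<in>I. h \<noteq> {} \<longrightarrow> \<not> h \<subseteq> emb m ` A"
        using conjunct2[OF A] unfolding indep_def by (rule conjunct2)
      ultimately show False by (meson bspec)
    qed
  qed
qed

lemma restr_mrank:
  assumes IP: "I \<subseteq> polys (n + m)" and X: "X \<subseteq> lat n"
  shows "mrank n (restrict_ideal n m I) X = mrank (n + m) I (emb m ` X)"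
proof -
  have "{card A |A. A \<subseteq> X \<and> finite A \<and> indep n (restrict_ideal n m I) A}
      = {card B |B. B \<subseteq> emb m ` X \<and> finite B \<and> indep (n + m) I B}"
  proof (intro equalityI subsetI)
    fix c assume "c \<in> {card A |A. A \<subseteq> X \<and> finite A \<and> indep n (restrict_ideal n m I) A}"
    then obtain A where A: "c = card A" "A \<subseteq> X" "finite A" "indep n (restrict_ideal n m I) A" by blast
    have 1: "card (emb m ` A) = card A" by (rule card_emb)
    have 2: "indep (n + m) I (emb m ` A)" using A(4) restr_indep[OF IP, of A] by simp
    have 3: "emb m ` A \<subseteq> emb m ` X" using A(2) by (rule image_mono)
    have 4: "finite (emb m ` A)" using A(3) by simp
    have "c = card (emb m ` A) \<and> emb m ` A \<subseteq> emb m ` X \<and> finite (emb m ` A) \<and> indep (n + m) I (emb m ` A)"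
      using 1 2 3 4 A(1) by simp
    then show "c \<in> {card B |B. B \<subseteq> emb m ` X \<and> finite B \<and> indep (n + m) I B}"
      by blast
  next
    fix c assume "c \<in> {card B |B. B \<subseteq> emb m ` X \<and> finite B \<and> indep (n + m) I B}"
    then obtain B where B: "c = card B" "B \<subseteq> emb m ` X" "finite B" "indep (n + m) I B" by blast
    define A where "A = {v \<in> X. emb m v \<in> B}"
    have eA: "emb m ` A = B" unfolding A_def by (rule preimg[OF B(2)])
    have cA: "card A = card B" using eA card_emb[of m A] by simp
    have fA: "finite A" using eA B(3) finite_emb[of m A] by simp
    have AX: "A \<subseteq> X" unfolding A_def by blast
    have "indep n (restrict_ideal n m I) A" using restr_indep[OF IP, of A] eA B(4) AX X by simp
    then have "c = card A \<and> A \<subseteq> X \<and> finite A \<and> indep n (restrict_ideal n m I) A"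
      using cA fA B(1) AX by simp
    then show "c \<in> {card A |A. A \<subseteq> X \<and> finite A \<and> indep n (restrict_ideal n m I) A}"
      by blast
  qed
  then show ?thesis unfolding mrank_def by simp
qed

lemma restr_circuit:
  assumes IP: "I \<subseteq> polys (n + m)" and C: "circuit n (restrict_ideal n m I) C"
  shows "circuit (n + m) I (emb m ` C)"
  unfolding circuit_def
proof (intro conjI allI impI)
  have Cl: "C \<subseteq> lat n" using C unfolding circuit_def by blast
  then show "emb m ` C \<subseteq> lat (n + m)" using emb_lat_img by blast
  have "\<not> indep n (restrict_ideal n m I) C" using C unfolding circuit_def by simp
  then show "\<not> indep (n + m) I (emb m ` C)" using Cl restr_indep[OF IP, of C] by simp
  fix D assume D: "D \<subset> emb m ` C"
  define D' where "D' = {v \<in> C. emb m v \<in> D}"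
  have eD: "emb m ` D' = D" unfolding D'_def by (rule preimg) (use D in blast)
  have "D' \<subset> C" using D eD unfolding D'_def by blast
  then have "indep n (restrict_ideal n m I) D'" using C unfolding circuit_def by simp
  then show "indep (n + m) I D" using restr_indep[OF IP, of D'] eD by simp
qed

context bnd begin
lemma mrank_indep2: assumes "indep N I D" "finite D" shows "mrank N I D = card D"
proof -
  have "card D \<le> mrank N I D" using mrank_le assms by blast
  moreover obtain A where A: "A \<subseteq> D" "card A = mrank N I D" using mrank_ex by blast
  then have "mrank N I D \<le> card D" using card_mono[OF assms(2) A(1)] by simp
  ultimately show ?thesis by simp
qed
end

lemma inf_lat: assumes "n \<ge> 1" shows "infinite (lat n)"
proof
  assume fin: "finite (lat n)"
  have "range (\<lambda>k::int. k # replicate (n - 1) 0) \<subseteq> lat n" using assms unfolding lat_def by auto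
  moreover have "inj (\<lambda>k::int. k # replicate (n - 1) 0)" unfolding inj_def by simp
  ultimately have "finite (UNIV :: int set)"
    using fin finite_subset finite_imageD by blast
  then show False by simp
qed

lemma sub_card: "infinite X \<or> (finite X \<and> card X \<ge> k) \<Longrightarrow> \<exists>D. D \<subseteq> X \<and> finite D \<and> card D = k"
proof (elim disjE conjE)
  assume "infinite X" then show ?thesis using infinite_arbitrarily_large by blast
next
  assume "finite X" "card X \<ge> k"
  then obtain D where "D \<subseteq> X" "card D = k" using obtain_subset_with_card_n by blast
  then show ?thesis using \<open>finite X\<close> finite_subset by blast
qed

theorem mainTheorem10:
  fixes n m d :: nat and I :: "int list set set"
  assumes "d \<ge> 1" and "n \<ge> 1"
    and "tropical_ideal (n + m) I" and "paving (n + m) I (d + 1)"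
  shows "(\<not> (\<exists>S\<in>hyperplanes (n + m) I d. emb m ` lat n \<subseteq> S) \<longrightarrow>
           tropical_ideal n (restrict_ideal n m I) \<and>
           paving n (restrict_ideal n m I) (d + 1) \<and>
           d_partition (lat n) d (restrict_partition n m d (hyperplanes (n + m) I d)) \<and>
           translation_invariant n (restrict_partition n m d (hyperplanes (n + m) I d)) \<and>
           hyperplanes n (restrict_ideal n m I) d =
             restrict_partition n m d (hyperplanes (n + m) I d))
       \<and> ((\<exists>S\<in>hyperplanes (n + m) I d. emb m ` lat n \<subseteq> S) \<longrightarrow>
           tropical_ideal n (restrict_ideal n m I) \<and>
           paving n (restrict_ideal n m I) d \<and>
           (\<forall>A. indep n (restrict_ideal n m I) A \<longleftrightarrow>
                  A \<subseteq> lat n \<and> finite A \<and> card A \<le> d) \<and>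
           hyperplanes n (restrict_ideal n m I) (d - 1) =
             {D. D \<subseteq> lat n \<and> finite D \<and> card D = d - 1})"
proof -
  interpret P: pav "n + m" I d using assms by unfold_locales
  have IP: "I \<subseteq> polys (n + m)" using assms(3) unfolding tropical_ideal_def is_ideal_def by blast
  define J where "J = restrict_ideal n m I"
  define Hs where "Hs = hyperplanes (n + m) I d"
  have tJ: "tropical_ideal n J" unfolding J_def using restr_trop assms(3) by blast
  have iJ: "is_ideal n J" using tJ unfolding tropical_ideal_def by blast
  have infl: "infinite (lat n)" using inf_lat assms(2) .
  have indJ: "indep n J A \<longleftrightarrow> A \<subseteq> lat n \<and> indep (n + m) I (emb m ` A)" for A
    unfolding J_def using restr_indep[OF IP] .
  have mrJ: "mrank n J X = mrank (n + m) I (emb m ` X)" if "X \<subseteq> lat n" for X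
    unfolding J_def using restr_mrank[OF IP that] .
  have bJ: "finite A \<and> card A \<le> d + 1" if "indep n J A" for A
  proof -
    have "indep (n + m) I (emb m ` A)" using that indJ by blast
    then have "finite (emb m ` A) \<and> card (emb m ` A) \<le> d + 1" by (rule P.bnd_ax)
    then show ?thesis by (simp add: finite_emb card_emb)
  qed
  interpret BJ: bnd n J "d + 1" by unfold_locales (rule bJ)
  have smallJ: "indep n J A" if "A \<subseteq> lat n" "finite A" "card A \<le> d" for A
  proof -
    have "indep (n + m) I (emb m ` A)"
      by (rule P.small_indep) (use that emb_lat_img in \<open>auto simp: finite_emb card_emb\<close>)
    then show ?thesis using indJ that(1) by blast
  qed
  have dsub: "\<exists>D. D \<subseteq> lat n \<and> finite D \<and> card D = k" for k using sub_card infl by blast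
  show ?thesis
  proof (intro conjI impI)
    assume nS: "\<not> (\<exists>S\<in>hyperplanes (n + m) I d. emb m ` lat n \<subseteq> S)"
    show "tropical_ideal n (restrict_ideal n m I)" using tJ J_def by simp
    have mZ: "mrank (n + m) I (emb m ` lat n) = d + 1"
    proof -
      obtain D where D: "D \<subseteq> lat n" "finite D" "card D = d" using dsub by blast
      have "indep (n + m) I (emb m ` D)" using smallJ[OF D(1,2)] D indJ by simp
      moreover have "emb m ` D \<subseteq> emb m ` lat n" using D(1) by (rule image_mono)
      ultimately have "card (emb m ` D) \<le> mrank (n + m) I (emb m ` lat n)"
        using P.mrank_le by blast
      then have "d \<le> mrank (n + m) I (emb m ` lat n)" using D(3) by (simp add: card_emb)
      moreover have "mrank (n + m) I (emb m ` lat n) \<noteq> d"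
        using P.exists_hyp[OF emb_lat_img[OF order_refl]] nS by blast
      moreover have "mrank (n + m) I (emb m ` lat n) \<le> d + 1" using P.mrank_bound .
      ultimately show ?thesis by linarith
    qed
    have pJ: "paving n J (d + 1)"
      unfolding paving_def zero_dim_def
    proof (intro conjI)
      show "\<forall>A. indep n J A \<longrightarrow> finite A \<and> card A \<le> d + 1" using bJ by blast
      show "\<exists>A. indep n J A \<and> finite A \<and> card A = d + 1"
        using BJ.mrank_ex[of "lat n"] mrJ[OF order_refl] mZ by auto
      show "\<forall>C. circuit n J C \<longrightarrow> finite C \<and> (card C = d + 1 \<or> card C = d + 1 + 1)"
      proof (intro allI impI)
      fix C assume C: "circuit n J C"
      then have "circuit (n + m) I (emb m ` C)" using restr_circuit[OF IP] J_def by simp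
      moreover have "\<forall>C. circuit (n + m) I C \<longrightarrow> finite C \<and> (card C = d + 1 \<or> card C = d + 1 + 1)"
        using assms(4) unfolding paving_def by (rule conjunct2)
      ultimately have "finite (emb m ` C) \<and> (card (emb m ` C) = d + 1 \<or> card (emb m ` C) = d + 1 + 1)"
        by simp
      then show "finite C \<and> (card C = d + 1 \<or> card C = d + 1 + 1)" by (simp add: card_emb finite_emb)
    qed
    qed
    interpret PJ: pav n J d using tJ pJ assms(1) by unfold_locales
    have hypEq: "hyperplanes n J d = restrict_partition n m d Hs"
    proof (intro equalityI subsetI)
      fix X assume X: "X \<in> hyperplanes n J d"
      have Xl: "X \<subseteq> lat n" and mX: "mrank n J X = d" using X unfolding hyperplanes_def by auto
      have maxX: "mrank n J X' \<noteq> d" if "X \<subset> X'" "X' \<subseteq> lat n" for X'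
        using X that unfolding hyperplanes_def by blast
      have "mrank (n + m) I (emb m ` X) = d" using mrJ[OF Xl] mX by simp
      then have "\<exists>H\<in>hyperplanes (n + m) I d. emb m ` X \<subseteq> H"
        by (rule P.exists_hyp[OF emb_lat_img[OF Xl]])
      then obtain S where S: "S \<in> Hs" "emb m ` X \<subseteq> S" unfolding Hs_def by blast
      define R where "R = {v \<in> lat n. emb m v \<in> S}"
      have XR: "X \<subseteq> R" using Xl S unfolding R_def by blast
      have Rl: "R \<subseteq> lat n" unfolding R_def by blast
      have "mrank (n + m) I (emb m ` R) \<le> mrank (n + m) I S"
        by (rule P.mrank_mono) (auto simp: R_def)
      also have "\<dots> = d" using S(1) unfolding Hs_def hyperplanes_def by simp
      finally have "mrank n J R \<le> d" using mrJ[OF Rl] by simp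
      moreover have "d \<le> mrank n J R" using BJ.mrank_mono[OF XR] mX by simp
      ultimately have "mrank n J R = d" by simp
      then have XR': "X = R" using maxX[of R] XR Rl by blast
      obtain A where A: "A \<subseteq> X" "finite A" "card A = d" using BJ.mrank_ex[of X] mX by auto
      then have "atleast d R" using XR' unfolding atleast_def by blast
      then show "X \<in> restrict_partition n m d Hs"
        unfolding restrict_partition_def using S(1) XR' R_def by blast
    next
      fix X assume "X \<in> restrict_partition n m d Hs"
      then obtain S where S: "S \<in> Hs" and XS: "X = {v \<in> lat n. emb m v \<in> S}" and al: "atleast d X"
        unfolding restrict_partition_def by blast
      have Xl: "X \<subseteq> lat n" using XS by blast
      have Sh: "S \<in> hyperplanes (n + m) I d" using S Hs_def by simp
      obtain D where D: "D \<subseteq> X" "finite D" "card D = d" using al unfolding atleast_def by blast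
      have eXS: "emb m ` X \<subseteq> S" using XS by blast
      have "mrank (n + m) I (emb m ` X) \<le> mrank (n + m) I S" using P.mrank_mono[OF eXS] .
      also have "\<dots> = d" using Sh unfolding hyperplanes_def by blast
      finally have le: "mrank n J X \<le> d" using mrJ[OF Xl] by simp
      have iD: "indep n J D" using smallJ D Xl by auto
      have "d \<le> mrank n J X" using BJ.mrank_le[OF D(1) iD] D by simp
      then have mX: "mrank n J X = d" using le by simp
      show "X \<in> hyperplanes n J d"
        unfolding hyperplanes_def
      proof (intro CollectI conjI allI impI)
        show "X \<subseteq> lat n" by fact
        show "mrank n J X = d" by fact
        fix X' assume X': "X \<subset> X' \<and> X' \<subseteq> lat n"
        show "mrank n J X' \<noteq> d"
        proof
          assume mX': "mrank n J X' = d"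
          obtain y where y: "y \<in> X'" "y \<notin> X" using X' by blast
          have yl: "y \<in> lat n" using y X' by blast
          have yS: "emb m y \<notin> S" using y yl XS by blast
          have yD: "y \<notin> D" using y D by blast
          have "\<not> indep n J (insert y D)"
          proof
            assume "indep n J (insert y D)"
            moreover have "insert y D \<subseteq> X'" using y D X' by blast
            ultimately have "card (insert y D) \<le> d" using BJ.mrank_le[of "insert y D" X'] mX' by simp
            then show False using D yD by simp
          qed
          moreover have "insert y D \<subseteq> lat n" using yl D Xl by blast
          ultimately have "\<not> indep (n + m) I (emb m ` insert y D)" using indJ by blast
          then have ni: "\<not> indep (n + m) I (insert (emb m y) (emb m ` D))" by simp
          have "emb m ` D \<subseteq> S" using D eXS by blast
          moreover have "finite (emb m ` D)" "card (emb m ` D) = d" using D card_emb by auto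
          ultimately have "emb m y \<in> S"
            using P.key[OF Sh _ _ _ emb_lat[OF yl] ni] by blast
          then show False using yS by blast
        qed
      qed
    qed
    show "paving n (restrict_ideal n m I) (d + 1)" using pJ J_def by simp
    show "d_partition (lat n) d (restrict_partition n m d (hyperplanes (n + m) I d))"
    proof -
      have "d_partition (lat n) d (restrict_partition n m d Hs)" using PJ.dpart unfolding hypEq .
      then show ?thesis unfolding Hs_def .
    qed
    show "translation_invariant n (restrict_partition n m d (hyperplanes (n + m) I d))"
    proof -
      have "translation_invariant n (restrict_partition n m d Hs)" using BJ.tr_hyp[OF iJ, of d] unfolding hypEq .
      then show ?thesis unfolding Hs_def .
    qed
    show "hyperplanes n (restrict_ideal n m I) d = restrict_partition n m d (hyperplanes (n + m) I d)"
      using hypEq Hs_def J_def by simp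
  next
    assume "\<exists>S\<in>hyperplanes (n + m) I d. emb m ` lat n \<subseteq> S"
    then obtain S where Sh: "S \<in> hyperplanes (n + m) I d" and ZS: "emb m ` lat n \<subseteq> S" by blast
    show "tropical_ideal n (restrict_ideal n m I)" using tJ J_def by simp
    have chr: "indep n J A \<longleftrightarrow> A \<subseteq> lat n \<and> finite A \<and> card A \<le> d" for A
    proof
      assume A: "indep n J A"
      have Al: "A \<subseteq> lat n" and iA: "indep (n + m) I (emb m ` A)" using A indJ[of A] by simp_all
      have "emb m ` A \<subseteq> S" using Al ZS by blast
      then have "card (emb m ` A) \<le> d" using P.hyp_le[OF Sh _ iA] by simp
      then show "A \<subseteq> lat n \<and> finite A \<and> card A \<le> d" using Al bJ[OF A] card_emb[of m A] by simp
    next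
      assume "A \<subseteq> lat n \<and> finite A \<and> card A \<le> d"
      then show "indep n J A" using smallJ[of A] by simp
    qed
    interpret BJd: bnd n J d by unfold_locales (simp add: chr)
    show "paving n (restrict_ideal n m I) d"
      unfolding J_def[symmetric] paving_def zero_dim_def
    proof (intro conjI)
      show "\<forall>A. indep n J A \<longrightarrow> finite A \<and> card A \<le> d" by (simp add: chr)
      obtain D where D: "D \<subseteq> lat n" "finite D" "card D = d" using dsub by blast
      then have "indep n J D" by (simp add: chr)
      then show "\<exists>A. indep n J A \<and> finite A \<and> card A = d" using D by blast
      show "\<forall>C. circuit n J C \<longrightarrow> finite C \<and> (card C = d \<or> card C = d + 1)"
      proof (intro allI impI)
      fix C assume C: "circuit n J C"
      have Cl: "C \<subseteq> lat n" and nC: "\<not> indep n J C" and sC: "\<And>D. D \<subset> C \<Longrightarrow> indep n J D"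
        using C unfolding circuit_def by auto
      have "C \<noteq> {}" using nC indep_empty by blast
      then obtain c where c: "c \<in> C" by blast
      have "indep n J (C - {c})" using sC c by blast
      then have "finite (C - {c})" "card (C - {c}) \<le> d" using chr by auto
      then have fC: "finite C" and cC: "card C \<le> d + 1" using c by (auto simp: card_Diff_singleton)
      have "\<not> card C \<le> d" using nC chr[of C] Cl fC by simp
      then show "finite C \<and> (card C = d \<or> card C = d + 1)" using fC cC by simp
    qed
    qed
    show "\<forall>A. indep n (restrict_ideal n m I) A \<longleftrightarrow> A \<subseteq> lat n \<and> finite A \<and> card A \<le> d"
      using chr J_def by simp
    show "hyperplanes n (restrict_ideal n m I) (d - 1) = {D. D \<subseteq> lat n \<and> finite D \<and> card D = d - 1}"
      unfolding J_def[symmetric]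
    proof (intro equalityI subsetI)
      fix X assume X: "X \<in> hyperplanes n J (d - 1)"
      have Xl: "X \<subseteq> lat n" and mX: "mrank n J X = d - 1" using X unfolding hyperplanes_def by auto
      have fX: "finite X \<and> card X \<le> d - 1"
      proof (rule ccontr)
        assume "\<not> (finite X \<and> card X \<le> d - 1)"
        then have "infinite X \<or> (finite X \<and> card X \<ge> d)" by auto
        then obtain D where D: "D \<subseteq> X" "finite D" "card D = d" using sub_card by blast
        then have "indep n J D" using chr Xl by auto
        then have "d \<le> d - 1" using BJd.mrank_le[OF D(1)] D mX by simp
        then show False using assms(1) by simp
      qed
      then have "indep n J X" using chr Xl assms(1) by auto
      then have "card X = d - 1" using BJd.mrank_indep2 fX mX by simp
      then show "X \<in> {D. D \<subseteq> lat n \<and> finite D \<and> card D = d - 1}" using Xl fX by blast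
    next
      fix X assume "X \<in> {D. D \<subseteq> lat n \<and> finite D \<and> card D = d - 1}"
      then have Xl: "X \<subseteq> lat n" and fX: "finite X" and cX: "card X = d - 1" by auto
      have iX: "indep n J X" using chr Xl fX cX by simp
      show "X \<in> hyperplanes n J (d - 1)"
        unfolding hyperplanes_def
      proof (intro CollectI conjI allI impI)
        show "X \<subseteq> lat n" by fact
        show "mrank n J X = d - 1" using BJd.mrank_indep2[OF iX fX] cX by simp
        fix H' assume H': "X \<subset> H' \<and> H' \<subseteq> lat n"
        then obtain y where y: "y \<in> H'" "y \<notin> X" by blast
        have c: "card (insert y X) = d" using cX fX y assms(1) by simp
        have "indep n J (insert y X)" using chr c fX y H' Xl by auto
        moreover have "insert y X \<subseteq> H'" using y H' by blast
        ultimately have "d \<le> mrank n J H'" using BJd.mrank_le[of "insert y X" H'] c by simp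
        then show "mrank n J H' \<noteq> d - 1" using assms(1) by simp
      qed
    qed
  qed
qed

end
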